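(* Let $\mathcal{C}$ be the set of all finite fields $\mathbb{F}_p$ with $p$ prime, viewed as structures in the language $\{0,1,+\}$. For every non-empty finite subset $\mathcal{C}_0\subseteq\mathcal{C}$ there is a positive existential $\{0,1,+\}$-formula $\varphi(x)$ such that for every $\mathbb{F}_p\in\mathcal{C}_0$ and $x\in\mathbb{F}_p$, $\mathbb{F}_p\models\varphi(x)$ iff $x$ is a square in $\mathbb{F}_p$. However, for no infinite subset $\mathcal{C}_1\subseteq \mathcal{C}$ is there a positive existential $\{0,1,+\}$-formula defining "$x$ is a square" simultaneously in all $\mathbb{F}_p\in\mathcal{C}_1$. In particular, there is no positive existential $\{0,1,+\}$-formula $\mu(x,y,w)$ defining the relation $w=xy$ simultaneously in all $\mathbb{F}_p\in\mathcal{C}$. *)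

theory Defs
  imports "HOL-Computational_Algebra.Primes"
begin

datatype tm = Var nat | Zero | One | Add tm tm

datatype pefm = TrueF | FalseF | Eq tm tm | Conj pefm pefm | Disj pefm pefm | Ex nat pefm

text \<open>The field F_p is represented with carrier {0..<p} and arithmetic mod p.\<close>
fun tval :: "nat \<Rightarrow> (nat \<Rightarrow> nat) \<Rightarrow> tm \<Rightarrow> nat" where
  "tval p e (Var i) = e i"
| "tval p e Zero = 0"
| "tval p e One = 1 mod p"
| "tval p e (Add s t) = (tval p e s + tval p e t) mod p"

fun sat :: "nat \<Rightarrow> (nat \<Rightarrow> nat) \<Rightarrow> pefm \<Rightarrow> bool" where
  "sat p e TrueF = True"
| "sat p e FalseF = False"
| "sat p e (Eq s t) = (tval p e s = tval p e t)"
| "sat p e (Conj a b) = (sat p e a \<and> sat p e b)"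
| "sat p e (Disj a b) = (sat p e a \<or> sat p e b)"
| "sat p e (Ex i a) = (\<exists>v<p. sat p (e(i := v)) a)"

fun tvars :: "tm \<Rightarrow> nat set" where
  "tvars (Var i) = {i}"
| "tvars Zero = {}"
| "tvars One = {}"
| "tvars (Add s t) = tvars s \<union> tvars t"

fun fv :: "pefm \<Rightarrow> nat set" where
  "fv TrueF = {}"
| "fv FalseF = {}"
| "fv (Eq s t) = tvars s \<union> tvars t"
| "fv (Conj a b) = fv a \<union> fv b"
| "fv (Disj a b) = fv a \<union> fv b"
| "fv (Ex i a) = fv a - {i}"

definition defines_in :: "nat \<Rightarrow> nat \<Rightarrow> pefm \<Rightarrow> (nat list \<Rightarrow> bool) \<Rightarrow> bool" where
  "defines_in p k \<phi> R \<longleftrightarrow> fv \<phi> \<subseteq> {0..<k} \<and>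
     (\<forall>e. (\<forall>i. e i < p) \<longrightarrow> (sat p e \<phi> \<longleftrightarrow> R (map e [0..<k])))"

definition is_square_mod :: "nat \<Rightarrow> nat \<Rightarrow> bool" where
  "is_square_mod p x \<longleftrightarrow> (\<exists>y<p. (y * y) mod p = x)"

definition square_rel :: "nat \<Rightarrow> nat list \<Rightarrow> bool" where
  "square_rel p xs = is_square_mod p (xs ! 0)"

definition mult_rel :: "nat \<Rightarrow> nat list \<Rightarrow> bool" where
  "mult_rel p xs \<longleftrightarrow> xs ! 2 = (xs ! 0 * xs ! 1) mod p"

end

theory Submission
  imports Defs
begin

definition good :: "nat \<Rightarrow> (nat \<Rightarrow> nat) \<Rightarrow> bool" where
  "good p e \<longleftrightarrow> (\<forall>i. e i < p)"

definition comb1 :: "nat \<Rightarrow> nat \<Rightarrow> nat \<Rightarrow> nat \<Rightarrow> nat" where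
  "comb1 p l a b = (l * a + (p + 1 - l) * b) mod p"

definition comb :: "nat \<Rightarrow> nat \<Rightarrow> (nat \<Rightarrow> nat) \<Rightarrow> (nat \<Rightarrow> nat) \<Rightarrow> (nat \<Rightarrow> nat)" where
  "comb p l e1 e2 = (\<lambda>i. comb1 p l (e1 i) (e2 i))"

lemma comb1_lt: "p > 0 \<Longrightarrow> comb1 p l a b < p"
  by (simp add: comb1_def)

lemma good_comb: "p > 0 \<Longrightarrow> good p (comb p l e1 e2)"
  by (simp add: good_def comb_def comb1_lt)

lemma comb1_add:
  "((l * a1 + m * a2) mod p + (l * b1 + m * b2) mod p) mod p
   = (l * ((a1 + b1) mod p) + m * ((a2 + b2) mod p)) mod (p::nat)"
proof -
  have "((l * a1 + m * a2) mod p + (l * b1 + m * b2) mod p) mod p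
        = (l * a1 + m * a2 + (l * b1 + m * b2)) mod p" by (simp add: mod_add_eq)
  also have "\<dots> = (l * (a1 + b1) + m * (a2 + b2)) mod p" by (simp add: algebra_simps)
  also have "\<dots> = ((l * (a1 + b1)) mod p + (m * (a2 + b2)) mod p) mod p"
    by (rule mod_add_eq[symmetric])
  also have "\<dots> = ((l * ((a1 + b1) mod p)) mod p + (m * ((a2 + b2) mod p)) mod p) mod p"
    by (simp only: mod_mult_right_eq)
  also have "\<dots> = (l * ((a1 + b1) mod p) + m * ((a2 + b2) mod p)) mod p"
    by (rule mod_add_eq)
  finally show ?thesis .
qed

lemma tval_comb:
  assumes "p > 1" "good p e1" "good p e2" "l \<le> p"
  shows "tval p (comb p l e1 e2) t = comb1 p l (tval p e1 t) (tval p e2 t)"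
proof (induction t)
  case (Var x)
  then show ?case by (simp add: comb_def)
next
  case Zero
  then show ?case by (simp add: comb1_def)
next
  case One
  have "(l + (p + 1 - l)) = p + 1" using assms by simp
  moreover have "Suc p mod p = 1" using assms
    by (metis Suc_eq_plus1 add.commute mod_add_self2 mod_less)
  ultimately show ?case using assms by (simp add: comb1_def)
next
  case (Add s t)
  then show ?case unfolding comb1_def by (simp add: comb1_add)
qed

fun N :: "pefm \<Rightarrow> nat" where
  "N TrueF = 1"
| "N FalseF = 0"
| "N (Eq s t) = 1"
| "N (Conj a b) = N a * N b"
| "N (Disj a b) = N a + N b"
| "N (Ex i a) = N a"

definition affc :: "nat \<Rightarrow> (nat \<Rightarrow> nat) set \<Rightarrow> bool" where
  "affc p T \<longleftrightarrow> T \<subseteq> {e. good p e} \<and> (\<forall>e1\<in>T. \<forall>e2\<in>T. \<forall>l<p. comb p l e1 e2 \<in> T)"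

lemma decomp:
  assumes "p > 1"
  shows "\<exists>Ts. length Ts \<le> N \<phi> \<and> (\<forall>T\<in>set Ts. affc p T) \<and>
             {e. good p e \<and> sat p e \<phi>} = \<Union>(set Ts)"
proof (induction \<phi>)
  case TrueF
  show ?case
    by (rule exI[of _ "[{e. good p e}]"]) (use assms in \<open>auto simp: affc_def good_comb\<close>)
next
  case FalseF
  show ?case by (rule exI[of _ "[]"]) auto
next
  case (Eq s t)
  show ?case
  proof (rule exI[of _ "[{e. good p e \<and> tval p e s = tval p e t}]"], intro conjI)
    show "\<forall>T\<in>set [{e. good p e \<and> tval p e s = tval p e t}]. affc p T"
      using assms by (auto simp: affc_def good_comb tval_comb)
  qed auto
next
  case (Conj a b)
  then obtain Ta Tb where a: "length Ta \<le> N a" "\<forall>T\<in>set Ta. affc p T"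
      "{e. good p e \<and> sat p e a} = \<Union>(set Ta)"
    and b: "length Tb \<le> N b" "\<forall>T\<in>set Tb. affc p T"
      "{e. good p e \<and> sat p e b} = \<Union>(set Tb)" by blast
  show ?case
  proof (rule exI[of _ "[A \<inter> B. A \<leftarrow> Ta, B \<leftarrow> Tb]"], intro conjI)
    show "length [A \<inter> B. A \<leftarrow> Ta, B \<leftarrow> Tb] \<le> N (Conj a b)"
    proof -
      have "length [A \<inter> B. A \<leftarrow> Ta, B \<leftarrow> Tb] = length Ta * length Tb"
        by (induction Ta) auto
      then show ?thesis using a(1) b(1) by (simp add: mult_le_mono)
    qed
    show "\<forall>T\<in>set [A \<inter> B. A \<leftarrow> Ta, B \<leftarrow> Tb]. affc p T"
      using a(2) b(2) by (auto simp: affc_def)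
    have "{e. good p e \<and> sat p e (Conj a b)} =
          {e. good p e \<and> sat p e a} \<inter> {e. good p e \<and> sat p e b}" by auto
    also have "\<dots> = \<Union>(set [A \<inter> B. A \<leftarrow> Ta, B \<leftarrow> Tb])"
      unfolding a(3) b(3) by auto
    finally show "{e. good p e \<and> sat p e (Conj a b)} = \<Union>(set [A \<inter> B. A \<leftarrow> Ta, B \<leftarrow> Tb])" .
  qed
next
  case (Disj a b)
  then obtain Ta Tb where a: "length Ta \<le> N a" "\<forall>T\<in>set Ta. affc p T"
      "{e. good p e \<and> sat p e a} = \<Union>(set Ta)"
    and b: "length Tb \<le> N b" "\<forall>T\<in>set Tb. affc p T"
      "{e. good p e \<and> sat p e b} = \<Union>(set Tb)" by blast
  show ?case
  proof (rule exI[of _ "Ta @ Tb"], intro conjI)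
    have "{e. good p e \<and> sat p e (Disj a b)} =
          {e. good p e \<and> sat p e a} \<union> {e. good p e \<and> sat p e b}" by auto
    then show "{e. good p e \<and> sat p e (Disj a b)} = \<Union>(set (Ta @ Tb))"
      unfolding a(3) b(3) by auto
  qed (use a b in auto)
next
  case (Ex i a)
  then obtain Ta where a: "length Ta \<le> N a" "\<forall>T\<in>set Ta. affc p T"
      "{e. good p e \<and> sat p e a} = \<Union>(set Ta)" by blast
  define pr where "pr = (\<lambda>A. {e. good p e \<and> (\<exists>v<p. e(i:=v) \<in> A)})"
  show ?case
  proof (rule exI[of _ "map pr Ta"], intro conjI)
    show "length (map pr Ta) \<le> N (Ex i a)" using a(1) by simp
    show "\<forall>T\<in>set (map pr Ta). affc p T"
    proof
      fix T assume "T \<in> set (map pr Ta)"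
      then obtain A where A: "A \<in> set Ta" "T = pr A" by auto
      have aA: "affc p A" using A a(2) by auto
      show "affc p T" unfolding affc_def
      proof (intro conjI ballI allI impI)
        show "T \<subseteq> {e. good p e}" using A by (auto simp: pr_def)
        fix e1 e2 l assume e1: "e1 \<in> T" and e2: "e2 \<in> T" and l: "l < p"
        from e1 A obtain v1 where v1: "v1 < p" "e1(i:=v1) \<in> A" "good p e1" by (auto simp: pr_def)
        from e2 A obtain v2 where v2: "v2 < p" "e2(i:=v2) \<in> A" "good p e2" by (auto simp: pr_def)
        have "comb p l (e1(i:=v1)) (e2(i:=v2)) \<in> A" using aA v1 v2 l by (auto simp: affc_def)
        moreover have "comb p l (e1(i:=v1)) (e2(i:=v2)) = (comb p l e1 e2)(i := comb1 p l v1 v2)"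
          by (auto simp: comb_def)
        ultimately show "comb p l e1 e2 \<in> T"
          using A assms by (auto simp: pr_def good_comb comb1_lt intro!: exI[of _ "comb1 p l v1 v2"])
      qed
    qed
    have "{e. good p e \<and> sat p e (Ex i a)} = {e. good p e \<and> (\<exists>v<p. e(i:=v) \<in> {e. good p e \<and> sat p e a})}"
      by (auto simp: good_def)
    then show "{e. good p e \<and> sat p e (Ex i a)} = \<Union>(set (map pr Ta))"
      unfolding a(3) pr_def by auto
  qed
qed


lemma line_full:
  assumes p: "prime p" and A: "A \<subseteq> {..<p}"
    and cl: "\<forall>a\<in>A. \<forall>b\<in>A. \<forall>l<p. comb1 p l a b \<in> A"
    and ab: "a \<in> A" "b \<in> A" "a \<noteq> b"
  shows "A = {..<p}"
proof -
  define f where "f = (\<lambda>l. comb1 p l a b)"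
  have ap: "a < p" "b < p" using A ab by auto
  have inj: "inj_on f {..<p}"
  proof (rule inj_onI)
    fix l1 l2 assume l1: "l1 \<in> {..<p}" and l2: "l2 \<in> {..<p}" and eq: "f l1 = f l2"
    have ex: "int (l * a + (p + 1 - l) * b) = int l * (int a - int b) + (int p + 1) * int b"
      if "l < p" for l
    proof -
      have "int (p + 1 - l) = int p + 1 - int l" using that by simp
      moreover have "int (l * a + (p + 1 - l) * b) = int l * int a + int (p + 1 - l) * int b"
        by simp
      ultimately show ?thesis by (simp add: algebra_simps)
    qed
    have "int (l1 * a + (p + 1 - l1) * b) mod int p = int (l2 * a + (p + 1 - l2) * b) mod int p"
      using eq unfolding f_def comb1_def by (metis of_nat_mod)
    then have "int p dvd int (l1 * a + (p + 1 - l1) * b) - int (l2 * a + (p + 1 - l2) * b)"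
      by (simp add: mod_eq_dvd_iff)
    also have "int (l1 * a + (p + 1 - l1) * b) - int (l2 * a + (p + 1 - l2) * b)
        = (int l1 - int l2) * (int a - int b)"
      using l1 l2 ex[of l1] ex[of l2] by (simp add: algebra_simps)
    finally have d: "int p dvd (int l1 - int l2) * (int a - int b)" .
    have pi: "prime (int p)" using p by simp
    have nd: "\<not> int p dvd (int a - int b)"
    proof
      assume "int p dvd (int a - int b)"
      then have "\<bar>int p\<bar> \<le> \<bar>int a - int b\<bar>" using ab(3) by (intro dvd_imp_le_int) auto
      then show False using ap by linarith
    qed
    have "int p dvd (int l1 - int l2)" using d nd pi prime_dvd_mult_iff by blast
    moreover have "\<not> (int p dvd (int l1 - int l2))" if "l1 \<noteq> l2"
    proof
      assume "int p dvd (int l1 - int l2)"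
      then have "\<bar>int p\<bar> \<le> \<bar>int l1 - int l2\<bar>" using that by (intro dvd_imp_le_int) auto
      then show False using l1 l2 by auto
    qed
    ultimately show "l1 = l2" by blast
  qed
  have sub: "f ` {..<p} \<subseteq> A" using cl ab by (auto simp: f_def)
  have "card (f ` {..<p}) = p" using inj by (simp add: card_image)
  then have "f ` {..<p} = {..<p}"
    using sub A by (intro card_subset_eq) auto
  then show ?thesis using sub A by auto
qed


lemma sq_inj: "inj_on (\<lambda>y::nat. y * y) A"
proof (rule inj_onI)
  fix x y :: nat assume "x \<in> A" "y \<in> A" "x * x = y * y"
  then show "x = y"
    by (metis less_irrefl mult_strict_mono' nat_neq_iff zero_le)
qed

lemma sq_lower:
  assumes "K * K < p"
  shows "K + 1 \<le> card {w. w < p \<and> is_square_mod p w}"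
proof -
  have sub: "(\<lambda>y. y * y) ` {..K} \<subseteq> {w. w < p \<and> is_square_mod p w}"
  proof
    fix w assume "w \<in> (\<lambda>y. y * y) ` {..K}"
    then obtain y where y: "y \<le> K" "w = y * y" by auto
    have "y * y \<le> K * K" using y by (simp add: mult_le_mono)
    then have lt: "y * y < p" using assms by linarith
    moreover have "y < p" using lt by (metis le_less_trans le_square)
    ultimately show "w \<in> {w. w < p \<and> is_square_mod p w}"
      using y by (auto simp: is_square_mod_def intro!: exI[of _ y])
  qed
  have "card ((\<lambda>y. y * y) ` {..K}) = K + 1" using sq_inj by (simp add: card_image)
  moreover have "finite {w. w < p \<and> is_square_mod p w}" by simp
  ultimately show ?thesis using sub by (metis card_mono)
qed

lemma nonsquare:
  assumes "prime p" "p > 2"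
  shows "\<exists>w<p. \<not> is_square_mod p w"
proof (rule ccontr)
  assume "\<not> ?thesis"
  then have all: "\<forall>w<p. is_square_mod p w" by blast
  define f where "f = (\<lambda>y. (y * y) mod p)"
  have "{..<p} \<subseteq> f ` {..<p}"
    using all by (auto simp: is_square_mod_def f_def)
  moreover have "f ` {..<p} \<subseteq> {..<p}" using assms by (auto simp: f_def)
  ultimately have "f ` {..<p} = {..<p}" by blast
  then have "inj_on f {..<p}" by (intro eq_card_imp_inj_on) auto
  moreover have "f 1 = f (p - 1)"
  proof -
    have e: "(p - 1) * (p - 1) = 1 + (p - 2) * p" using assms(2)
      by (cases p) (auto simp: algebra_simps)
    have "f (p - 1) = (1 + (p - 2) * p) mod p" unfolding f_def e ..
    also have "\<dots> = 1 mod p" by (rule mod_mult_self1)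
    finally show ?thesis using assms(2) by (simp add: f_def)
  qed
  moreover have "(1::nat) \<noteq> p - 1" using assms(2) by simp
  ultimately show False using assms(2) unfolding inj_on_def
    by (metis diff_less lessThan_iff less_trans zero_less_one one_less_numeral_iff semiring_norm(76))
qed

lemma key:
  assumes p: "prime p" "p > 2"
    and g: "\<And>y w. y < p \<Longrightarrow> w < p \<Longrightarrow> good p (g y w)"
    and gc: "\<And>y1 w1 y2 w2 l. y1 < p \<Longrightarrow> w1 < p \<Longrightarrow> y2 < p \<Longrightarrow> w2 < p \<Longrightarrow> l < p \<Longrightarrow>
        comb p l (g y1 w1) (g y2 w2) = g (comb1 p l y1 y2) (comb1 p l w1 w2)"
    and h: "\<And>w. w < p \<Longrightarrow> (\<exists>y<p. sat p (g y w) \<phi>) \<longleftrightarrow> is_square_mod p w"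
  shows "card {w. w < p \<and> is_square_mod p w} \<le> N \<phi>"
proof -
  have p1: "p > 1" using p by simp
  obtain Ts where Ts: "length Ts \<le> N \<phi>" "\<forall>T\<in>set Ts. affc p T"
     "{e. good p e \<and> sat p e \<phi>} = \<Union>(set Ts)"
    using decomp[OF p1] by blast
  define B where "B = (\<lambda>T. {w. w < p \<and> (\<exists>y<p. g y w \<in> T)})"
  have sq: "{w. w < p \<and> is_square_mod p w} = (\<Union>T\<in>set Ts. B T)"
  proof -
    have "{w. w < p \<and> is_square_mod p w} = {w. w < p \<and> (\<exists>y<p. g y w \<in> {e. good p e \<and> sat p e \<phi>})}"
    proof (intro set_eqI iffI)
      fix w assume "w \<in> {w. w < p \<and> is_square_mod p w}"
      then show "w \<in> {w. w < p \<and> (\<exists>y<p. g y w \<in> {e. good p e \<and> sat p e \<phi>})}"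
        using h g by blast
    next
      fix w assume "w \<in> {w. w < p \<and> (\<exists>y<p. g y w \<in> {e. good p e \<and> sat p e \<phi>})}"
      then show "w \<in> {w. w < p \<and> is_square_mod p w}"
        using h by blast
    qed
    also have "\<dots> = (\<Union>T\<in>set Ts. B T)" unfolding Ts(3) B_def by auto
    finally show ?thesis .
  qed
  obtain w0 where w0: "w0 < p" "\<not> is_square_mod p w0" using nonsquare[OF p] by blast
  have c1: "card (B T) \<le> 1" if T: "T \<in> set Ts" for T
  proof (rule ccontr)
    assume "\<not> card (B T) \<le> 1"
    moreover have "finite (B T)" by (simp add: B_def)
    ultimately obtain a b where ab: "a \<in> B T" "b \<in> B T" "a \<noteq> b"
      using card_le_Suc0_iff_eq by (metis One_nat_def)
    have aT: "affc p T" using T Ts(2) by auto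
    have "B T = {..<p}"
    proof (rule line_full[OF p(1) _ _ ab])
      show "B T \<subseteq> {..<p}" by (auto simp: B_def)
      show "\<forall>a\<in>B T. \<forall>b\<in>B T. \<forall>l<p. comb1 p l a b \<in> B T"
      proof (intro ballI allI impI)
        fix a b l assume a: "a \<in> B T" and b: "b \<in> B T" and l: "l < p"
        from a obtain y1 where y1: "y1 < p" "g y1 a \<in> T" "a < p" by (auto simp: B_def)
        from b obtain y2 where y2: "y2 < p" "g y2 b \<in> T" "b < p" by (auto simp: B_def)
        have "comb p l (g y1 a) (g y2 b) \<in> T" using aT y1 y2 l by (auto simp: affc_def)
        then have "g (comb1 p l y1 y2) (comb1 p l a b) \<in> T" using gc y1 y2 l by simp
        moreover have "comb1 p l y1 y2 < p" "comb1 p l a b < p" using p by (auto intro: comb1_lt)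
        ultimately show "comb1 p l a b \<in> B T" by (auto simp: B_def)
      qed
    qed
    then have "w0 \<in> B T" using w0 by auto
    then have "w0 \<in> {w. w < p \<and> is_square_mod p w}" using sq T by auto
    then show False using w0 by auto
  qed
  have "card {w. w < p \<and> is_square_mod p w} \<le> (\<Sum>T\<in>set Ts. card (B T))"
    unfolding sq by (rule card_UN_le) simp
  also have "\<dots> \<le> (\<Sum>T\<in>set Ts. 1)" using c1 by (intro sum_mono) auto
  also have "\<dots> = card (set Ts)" by simp
  also have "\<dots> \<le> length Ts" by (rule card_length)
  finally show ?thesis using Ts(1) by linarith
qed


fun num :: "nat \<Rightarrow> tm" where
  "num 0 = Zero"
| "num (Suc n) = Add (num n) One"

lemma tval_num: "p > 0 \<Longrightarrow> tval p e (num n) = n mod p"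
proof (induction n)
  case (Suc n)
  then have "tval p e (num (Suc n)) = (n mod p + 1 mod p) mod p" by simp
  also have "\<dots> = (n + 1) mod p" by (rule mod_add_eq)
  finally show ?case by simp
qed simp

lemma tvars_num: "tvars (num n) = {}"
  by (induction n) auto

fun disj :: "pefm list \<Rightarrow> pefm" where
  "disj [] = FalseF"
| "disj (f # fs) = Disj f (disj fs)"

lemma sat_disj: "sat p e (disj fs) \<longleftrightarrow> (\<exists>f\<in>set fs. sat p e f)"
  by (induction fs) auto

lemma fv_disj: "fv (disj fs) = (\<Union>f\<in>set fs. fv f)"
  by (induction fs) auto

definition sqform :: "nat set \<Rightarrow> pefm" where
  "sqform C = disj (map (\<lambda>q. Conj (Eq (num q) Zero)
      (disj (map (\<lambda>y. Eq (Var 0) (num (y * y mod q))) [0..<q]))) (sorted_list_of_set C))"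

lemma part1:
  assumes "finite C" "C \<subseteq> {p. prime p}" "p \<in> C"
  shows "defines_in p 1 (sqform C) (square_rel p)"
proof -
  have pp: "prime p" using assms by auto
  then have p0: "p > 0" by (simp add: prime_gt_0_nat)
  have fv: "fv (sqform C) \<subseteq> {0..<1}"
    by (auto simp: sqform_def fv_disj tvars_num)
  have "sat p e (sqform C) \<longleftrightarrow> is_square_mod p (e 0)" for e
  proof -
    have "sat p e (sqform C) \<longleftrightarrow> (\<exists>q\<in>C. p dvd q \<and> (\<exists>y<q. e 0 = (y * y mod q) mod p))"
      using assms(1) p0 by (auto simp: sqform_def sat_disj tval_num)
        (blast, metis atLeastLessThan_iff dvd_imp_mod_0 zero_le)
    also have "\<dots> \<longleftrightarrow> (\<exists>y<p. e 0 = y * y mod p)"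
    proof
      assume "\<exists>q\<in>C. p dvd q \<and> (\<exists>y<q. e 0 = (y * y mod q) mod p)"
      then obtain q y where q: "q \<in> C" "p dvd q" "y < q" "e 0 = (y * y mod q) mod p" by blast
      have "prime q" using q assms by auto
      moreover have "p dvd q" using q by auto
      ultimately have "p = q" using pp by (simp add: primes_dvd_imp_eq)
      then show "\<exists>y<p. e 0 = y * y mod p" using q by auto
    next
      assume "\<exists>y<p. e 0 = y * y mod p"
      then show "\<exists>q\<in>C. p dvd q \<and> (\<exists>y<q. e 0 = (y * y mod q) mod p)"
        using assms(3) by (intro bexI[of _ p]) auto
    qed
    finally show ?thesis by (auto simp: is_square_mod_def)
  qed
  then show ?thesis using fv by (simp add: defines_in_def square_rel_def)
qed

lemma big_prime_in:
  assumes "infinite C" shows "\<exists>p\<in>C. p > (m::nat)"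
proof (rule ccontr)
  assume "\<not> ?thesis"
  then have "C \<subseteq> {..m}" by (auto simp: not_less)
  then show False using assms finite_subset by blast
qed

theorem proposition1p5:
  shows "(\<forall>C0. finite C0 \<and> C0 \<noteq> {} \<and> C0 \<subseteq> {p::nat. prime p} \<longrightarrow>
            (\<exists>\<phi>. \<forall>p\<in>C0. defines_in p 1 \<phi> (square_rel p)))
       \<and> (\<forall>C1. infinite C1 \<and> C1 \<subseteq> {p::nat. prime p} \<longrightarrow>
            \<not> (\<exists>\<phi>. \<forall>p\<in>C1. defines_in p 1 \<phi> (square_rel p)))
       \<and> \<not> (\<exists>\<mu>. \<forall>p::nat. prime p \<longrightarrow> defines_in p 3 \<mu> (mult_rel p))"
proof (intro conjI allI impI notI)
  fix C0 :: "nat set" assume "finite C0 \<and> C0 \<noteq> {} \<and> C0 \<subseteq> {p. prime p}"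
  then show "\<exists>\<phi>. \<forall>p\<in>C0. defines_in p 1 \<phi> (square_rel p)"
    using part1 by blast
next
  fix C1 :: "nat set"
  assume C1: "infinite C1 \<and> C1 \<subseteq> {p. prime p}"
  assume "\<exists>\<phi>. \<forall>p\<in>C1. defines_in p 1 \<phi> (square_rel p)"
  then obtain \<phi> where phi: "\<forall>p\<in>C1. defines_in p 1 \<phi> (square_rel p)" by blast
  define K where "K = N \<phi>"
  obtain p where p: "p \<in> C1" "p > K * K + 2" using big_prime_in C1 by blast
  have pp: "prime p" "p > 2" using p C1 by auto
  define g where "g = (\<lambda>(y::nat) w. (\<lambda>_::nat. 0::nat)(0 := w))"
  have "card {w. w < p \<and> is_square_mod p w} \<le> N \<phi>"
  proof (rule key[OF pp, of g])
    show "good p (g y w)" if "y < p" "w < p" for y w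
      using that pp by (auto simp: good_def g_def)
    show "comb p l (g y1 w1) (g y2 w2) = g (comb1 p l y1 y2) (comb1 p l w1 w2)" for y1 w1 y2 w2 l
      unfolding comb_def g_def by (rule ext) (simp add: comb1_def)
    show "(\<exists>y<p. sat p (g y w) \<phi>) \<longleftrightarrow> is_square_mod p w" if "w < p" for w
    proof -
      have "good p (g 0 w)" using that pp by (auto simp: good_def g_def)
      then have "sat p (g 0 w) \<phi> \<longleftrightarrow> is_square_mod p w"
        using phi p(1) by (auto simp: defines_in_def square_rel_def good_def g_def)
      moreover have "(\<exists>y<p. sat p (g y w) \<phi>) \<longleftrightarrow> sat p (g 0 w) \<phi>"
        using pp(2) unfolding g_def by auto
      ultimately show ?thesis by simp
    qed
  qed
  moreover have "K + 1 \<le> card {w. w < p \<and> is_square_mod p w}"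
    using p by (intro sq_lower) linarith
  ultimately show False unfolding K_def by linarith
next
  assume "\<exists>\<mu>. \<forall>p::nat. prime p \<longrightarrow> defines_in p 3 \<mu> (mult_rel p)"
  then obtain \<mu> where mu: "\<forall>p::nat. prime p \<longrightarrow> defines_in p 3 \<mu> (mult_rel p)" by blast
  define K where "K = N \<mu>"
  obtain p where p: "prime p" "p > K * K + 2"
    using big_prime_in[OF primes_infinite] by blast
  have pp: "prime p" "p > 2" using p by auto
  define g where "g = (\<lambda>(y::nat) w. (\<lambda>_::nat. 0::nat)(0 := y, 1 := y, 2 := w))"
  have "card {w. w < p \<and> is_square_mod p w} \<le> N \<mu>"
  proof (rule key[OF pp, of g])
    show "good p (g y w)" if "y < p" "w < p" for y w
      using that pp by (auto simp: good_def g_def)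
    show "comb p l (g y1 w1) (g y2 w2) = g (comb1 p l y1 y2) (comb1 p l w1 w2)" for y1 w1 y2 w2 l
      unfolding comb_def g_def by (rule ext) (simp add: comb1_def)
    show "(\<exists>y<p. sat p (g y w) \<mu>) \<longleftrightarrow> is_square_mod p w" if "w < p" for w
    proof -
      have "sat p (g y w) \<mu> \<longleftrightarrow> w = (y * y) mod p" if "y < p" for y
      proof -
        have "good p (g y w)" using that \<open>w < p\<close> pp by (auto simp: good_def g_def)
        moreover have "map (g y w) [0..<3] = [y, y, w]" by (simp add: g_def upt_rec)
        ultimately have "sat p (g y w) \<mu> \<longleftrightarrow> mult_rel p [y, y, w]"
          using mu pp by (metis defines_in_def good_def)
        then show ?thesis by (simp add: mult_rel_def)
      qed
      then show ?thesis by (auto simp: is_square_mod_def)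
    qed
  qed
  moreover have "K + 1 \<le> card {w. w < p \<and> is_square_mod p w}"
    using p by (intro sq_lower) linarith
  ultimately show False unfolding K_def by linarith
qed

end
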